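(* Let $m\ge 2$, $\boldsymbol{\mu}\in\mathbb{R}^m$, let $\boldsymbol{\Lambda}\in\mathbb{R}^{m\times m}$ be invertible, $\boldsymbol{\Sigma}=\boldsymbol{\Lambda}\boldsymbol{\Lambda}^T$, and let $\boldsymbol{\Sigma}^{-1/2}$ denote the symmetric positive definite inverse square root of $\boldsymbol{\Sigma}$. Let $\mathcal{R}$ be a scalar random variable with $\mathcal{R}>0$ almost surely, and let $\boldsymbol{\mathcal{V}}\sim vMF(\boldsymbol{\mu}_v,\tau)$ be independent of $\mathcal{R}$. Let $\boldsymbol{\mathcal{X}}=\boldsymbol{\mu}+\mathcal{R}\boldsymbol{\Lambda}\boldsymbol{\mathcal{V}}$ and $T=(\boldsymbol{\mathcal{X}}-\boldsymbol{\mu})^T\boldsymbol{\Sigma}^{-1}(\boldsymbol{\mathcal{X}}-\boldsymbol{\mu})$. Then $T$ is independent of the whitened random vector $\boldsymbol{\Sigma}^{-1/2}(\boldsymbol{\mathcal{X}}-\boldsymbol{\mu})/\sqrt{T}$.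
   Context: The von Mises–Fisher distribution $vMF(\boldsymbol{\mu}_v,\tau)$ on the unit sphere $\mathbb{S}^{m-1}=\{\mathbf{x}\in\mathbb{R}^m:\mathbf{x}^T\mathbf{x}=1\}$, with mean direction $\boldsymbol{\mu}_v\in\mathbb{S}^{m-1}$ and concentration $\tau>0$, has density with respect to the surface measure on $\mathbb{S}^{m-1}$ proportional to $\exp(\tau\boldsymbol{\mu}_v^T\mathbf{v})$. *)

theory Defs
  imports "HOL-Probability.Probability"
begin

text \<open>Surface (Hausdorff) measure on the unit sphere S^{m-1}, realised as the cone measure:
  sigma(A) = m * lebesgue({t x | x in A, 0 < t <= 1}), i.e. m times the push-forward of
  Lebesgue measure on the unit ball under the radial projection x -> x / |x|.\<close>
definition sphere_surface :: "'a::euclidean_space measure" where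
  "sphere_surface =
     density (distr (density lborel (indicator (ball 0 1))) borel sgn)
             (\<lambda>_. ennreal (real DIM('a)))"

definition vMF_density :: "'a::euclidean_space \<Rightarrow> real \<Rightarrow> 'a \<Rightarrow> real" where
  "vMF_density mu tau v =
     exp (tau * (mu \<bullet> v)) / (\<integral>w. exp (tau * (mu \<bullet> w)) \<partial>sphere_surface)"

definition vMF_distributed :: "'b measure \<Rightarrow> ('b \<Rightarrow> 'a::euclidean_space) \<Rightarrow> 'a \<Rightarrow> real \<Rightarrow> bool" where
  "vMF_distributed M V mu tau \<longleftrightarrow>
     distributed M sphere_surface V (\<lambda>v. ennreal (vMF_density mu tau v))"

text \<open>Independence of two random variables with (possibly different) Borel codomains:
  the standard definition P(X in A, Y in B) = P(X in A) P(Y in B) for all Borel A, B.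
  (The library's indep_var forces both variables to have the same codomain type.)\<close>
definition indep_rv :: "'w measure \<Rightarrow> ('w \<Rightarrow> 'a::topological_space) \<Rightarrow> ('w \<Rightarrow> 'b::topological_space) \<Rightarrow> bool" where
  "indep_rv M X Y \<longleftrightarrow>
     X \<in> borel_measurable M \<and> Y \<in> borel_measurable M \<and>
     (\<forall>A \<in> sets borel. \<forall>B \<in> sets borel.
        measure M (X -` A \<inter> Y -` B \<inter> space M) =
        measure M (X -` A \<inter> space M) * measure M (Y -` B \<inter> space M))"

end

theory Submission
  imports Defs
begin

lemma quad_id:
  fixes L :: "real^'n^'n" and v :: "real^'n"
  assumes inv: "invertible L"
  shows "(L *v v) \<bullet> (matrix_inv (L ** transpose L) *v (L *v v)) = v \<bullet> v"
proof -
  let ?S = "L ** transpose L"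
  have Sinv: "invertible ?S" using inv transpose_invertible invertible_mult by blast
  have SS: "?S ** matrix_inv ?S = mat 1"
    using Sinv unfolding invertible_def matrix_inv_def by (rule someI_ex[THEN conjunct1])
  define z where "z = matrix_inv ?S *v (L *v v)"
  have "?S *v z = L *v v" unfolding z_def
    by (metis SS matrix_vector_mul_assoc matrix_vector_mul_lid)
  hence "L *v (transpose L *v z) = L *v v" by (metis matrix_vector_mul_assoc)
  hence tz: "transpose L *v z = v" using inj_matrix_vector_mult[OF inv] by (auto dest: injD)
  have "(L *v v) \<bullet> z = v \<bullet> (transpose L *v z)"
    by (metis dot_lmul_matrix inner_commute transpose_matrix_vector)
  thus ?thesis using tz z_def by simp
qed

lemma AE_sphere_norm: "AE v in (sphere_surface :: 'a::euclidean_space measure). norm v = 1"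
proof -
  have sgn_m: "(sgn :: 'a \<Rightarrow> 'a) \<in> borel_measurable (density lborel (indicator (ball (0::'a) 1)))"
    by measurable
  have "AE x in lborel. (x::'a) \<noteq> 0" by (rule AE_lborel_singleton)
  hence "AE x in density lborel (indicator (ball (0::'a) 1)). x \<noteq> 0"
    by (subst AE_density) (auto intro: borel_measurable_indicator)
  hence "AE x in density lborel (indicator (ball (0::'a) 1)). norm (sgn x) = 1"
    by eventually_elim (simp add: norm_sgn)
  hence "AE v in distr (density lborel (indicator (ball (0::'a) 1))) borel sgn. norm v = 1"
    by (subst AE_distr_iff[OF sgn_m]) auto
  thus ?thesis unfolding sphere_surface_def
    by (subst AE_density) auto
qed

lemma AE_V_norm:
  fixes V :: "'b \<Rightarrow> 'a::euclidean_space"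
  assumes "vMF_distributed M V mu tau"
  shows "AE x in M. norm (V x) = 1"
proof -
  have d: "distributed M sphere_surface V (\<lambda>v. ennreal (vMF_density mu tau v))"
    using assms unfolding vMF_distributed_def .
  have Vm: "V \<in> measurable M sphere_surface" using d by (rule distributed_measurable)
  have ss: "sets (sphere_surface::'a measure) = sets borel" unfolding sphere_surface_def by simp
  have vm: "(\<lambda>v. ennreal (vMF_density mu tau v)) \<in> borel_measurable sphere_surface"
    using d by (rule distributed_borel_measurable)
  have "AE v in density sphere_surface (\<lambda>v. ennreal (vMF_density mu tau v)). norm v = 1"
    using AE_sphere_norm
    by (subst AE_density) (use vm in auto)
  hence "AE v in distr M sphere_surface V. norm v = 1"
    unfolding distributed_distr_eq_density[OF d] .
  moreover have "{x \<in> space sphere_surface. norm (x::'a) = 1} \<in> sets sphere_surface"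
    unfolding ss sets_eq_imp_space_eq[OF ss] by measurable
  ultimately show ?thesis
    by (subst (asm) AE_distr_iff[OF Vm]) auto
qed
theorem proposition2:
  fixes M :: "'w measure"
    and R :: "'w \<Rightarrow> real"
    and V :: "'w \<Rightarrow> real ^ 'm"
    and mu mu_v :: "real ^ 'm"
    and tau :: real
    and Lambda Sigma_inv_sqrt :: "real ^ 'm ^ 'm"
  assumes m2: "CARD('m) \<ge> 2"
    and P: "prob_space M"
    and inv: "invertible Lambda"
    and S_sym: "transpose Sigma_inv_sqrt = Sigma_inv_sqrt"
    and S_pd: "\<forall>x. x \<noteq> 0 \<longrightarrow> x \<bullet> (Sigma_inv_sqrt *v x) > 0"
    and S_sq: "Sigma_inv_sqrt ** Sigma_inv_sqrt = matrix_inv (Lambda ** transpose Lambda)"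
    and R_meas: "R \<in> borel_measurable M"
    and R_pos: "AE \<omega> in M. R \<omega> > 0"
    and mu_v: "norm mu_v = 1"
    and tau: "tau > 0"
    and V_vMF: "vMF_distributed M V mu_v tau"
    and indep: "indep_rv M R V"
  shows "let X = (\<lambda>\<omega>. mu + R \<omega> *\<^sub>R (Lambda *v V \<omega>));
             T = (\<lambda>\<omega>. (X \<omega> - mu) \<bullet> (matrix_inv (Lambda ** transpose Lambda) *v (X \<omega> - mu)))
         in indep_rv M T
              (\<lambda>\<omega>. (1 / sqrt (T \<omega>)) *\<^sub>R (Sigma_inv_sqrt *v (X \<omega> - mu)))"
  proof -
  define X where "X = (\<lambda>\<omega>. mu + R \<omega> *\<^sub>R (Lambda *v V \<omega>))"
  define T where "T = (\<lambda>\<omega>. (X \<omega> - mu) \<bullet> (matrix_inv (Lambda ** transpose Lambda) *v (X \<omega> - mu)))"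
  define W where "W = (\<lambda>\<omega>. (1 / sqrt (T \<omega>)) *\<^sub>R (Sigma_inv_sqrt *v (X \<omega> - mu)))"
  define g where "g = (\<lambda>v. Sigma_inv_sqrt *v (Lambda *v v))"
  define sq where "sq = (\<lambda>r::real. r ^ 2)"
  have Rm: "R \<in> borel_measurable M" and Vm: "V \<in> borel_measurable M"
    and ind: "\<And>A B. A \<in> sets borel \<Longrightarrow> B \<in> sets borel \<Longrightarrow>
        measure M (R -` A \<inter> V -` B \<inter> space M) =
        measure M (R -` A \<inter> space M) * measure M (V -` B \<inter> space M)"
    using indep unfolding indep_rv_def by auto
  have lin: "\<And>A :: real^'m^'m. continuous_on UNIV ((*v) A)"
    by (intro linear_continuous_on matrix_vector_mul_bounded_linear)
  have gc: "continuous_on UNIV g" unfolding g_def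
    by (rule continuous_on_compose2[OF lin lin]) auto
  have gm: "g \<in> borel_measurable borel" using gc by (rule borel_measurable_continuous_onI)
  have sqm: "sq \<in> borel_measurable borel" unfolding sq_def by measurable
  have Xm: "X \<in> borel_measurable M" unfolding X_def
    using Rm Vm borel_measurable_continuous_onI[OF lin]
    by measurable
  have Tm: "T \<in> borel_measurable M" unfolding T_def
    using Xm borel_measurable_continuous_onI[OF lin] by measurable
  have Wm: "W \<in> borel_measurable M" unfolding W_def
    using Xm Tm borel_measurable_continuous_onI[OF lin] by measurable
  have AEg: "AE \<omega> in M. R \<omega> > 0 \<and> norm (V \<omega>) = 1"
    using R_pos AE_V_norm[OF V_vMF] by eventually_elim auto
  have eqs: "T \<omega> = sq (R \<omega>) \<and> W \<omega> = g (V \<omega>)" if "R \<omega> > 0" "norm (V \<omega>) = 1" for \<omega>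
  proof -
    have vv: "V \<omega> \<bullet> V \<omega> = 1" using that(2) by (simp add: dot_square_norm)
    have "T \<omega> = (R \<omega>)^2 * ((Lambda *v V \<omega>) \<bullet> (matrix_inv (Lambda ** transpose Lambda) *v (Lambda *v V \<omega>)))"
      unfolding T_def X_def by (simp add: matrix_vector_mult_scaleR power2_eq_square)
    also have "\<dots> = (R \<omega>)^2" using quad_id[OF inv] vv by simp
    finally have T1: "T \<omega> = sq (R \<omega>)" unfolding sq_def .
    have "W \<omega> = (1 / R \<omega>) *\<^sub>R (R \<omega> *\<^sub>R g (V \<omega>))"
      unfolding W_def T1 sq_def X_def g_def using that(1)
      by (simp add: matrix_vector_mult_scaleR)
    also have "\<dots> = g (V \<omega>)" using that(1) by simp
    finally show ?thesis using T1 by simp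
  qed
  have main: "\<And>A B. A \<in> sets borel \<Longrightarrow> B \<in> sets borel \<Longrightarrow>
        measure M (T -` A \<inter> W -` B \<inter> space M) =
        measure M (T -` A \<inter> space M) * measure M (W -` B \<inter> space M)"
  proof -
    fix A :: "real set" and B :: "(real^'m) set"
    assume A: "A \<in> sets borel" and B: "B \<in> sets borel"
    have A': "sq -` A \<in> sets borel" using measurable_sets_borel[OF sqm A] by simp
    have B': "g -` B \<in> sets borel" using measurable_sets_borel[OF gm B] by simp
    have s1: "T -` A \<inter> W -` B \<inter> space M = (T -` A \<inter> space M) \<inter> (W -` B \<inter> space M)" by auto
    have s2: "R -` (sq -` A) \<inter> V -` (g -` B) \<inter> space M = (R -` (sq -` A) \<inter> space M) \<inter> (V -` (g -` B) \<inter> space M)" by auto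
    have m1: "T -` A \<inter> W -` B \<inter> space M \<in> sets M"
      unfolding s1 by (intro sets.Int measurable_sets[OF Tm A] measurable_sets[OF Wm B])
    have m2: "R -` (sq -` A) \<inter> V -` (g -` B) \<inter> space M \<in> sets M"
      unfolding s2 by (intro sets.Int measurable_sets[OF Rm A'] measurable_sets[OF Vm B'])
    have e1: "measure M (T -` A \<inter> W -` B \<inter> space M) = measure M (R -` (sq -` A) \<inter> V -` (g -` B) \<inter> space M)"
    proof (rule measure_eq_AE[OF _ m1 m2])
      show "AE x in M. (x \<in> T -` A \<inter> W -` B \<inter> space M) = (x \<in> R -` (sq -` A) \<inter> V -` (g -` B) \<inter> space M)"
        using AEg by eventually_elim (use eqs in auto)
    qed
    have e2: "measure M (T -` A \<inter> space M) = measure M (R -` (sq -` A) \<inter> space M)"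
      apply (rule measure_eq_AE)
      using AEg apply eventually_elim using eqs apply auto[1]
      using measurable_sets[OF Tm A] measurable_sets[OF Rm A'] by auto
    have e3: "measure M (W -` B \<inter> space M) = measure M (V -` (g -` B) \<inter> space M)"
      apply (rule measure_eq_AE)
      using AEg apply eventually_elim using eqs apply auto[1]
      using measurable_sets[OF Wm B] measurable_sets[OF Vm B'] by auto
    show "measure M (T -` A \<inter> W -` B \<inter> space M) =
        measure M (T -` A \<inter> space M) * measure M (W -` B \<inter> space M)"
      unfolding e1 e2 e3 by (rule ind[OF A' B'])
  qed
  have "indep_rv M T W" unfolding indep_rv_def using Tm Wm main by simp
  then show ?thesis unfolding W_def T_def X_def Let_def .
qed

end
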